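(* Let $m,d,s$ be positive integers and $q$ a prime power with $d/m<q-1$. Then the multiplicity code $\mathcal{C}(m,d,s,q)$ is a $k$-PIR code $[q^s,n,k]_Q^P$, where $n=\binom{d+s}{s}/\binom{s+m-1}{s}$, $k=\lfloor q/m\rfloor^{s-1}$, and $Q=q^{\binom{s+m-1}{s}}$.
   Context: For $\boldsymbol{i}=(i_1,\dots,i_s)$ a vector of nonnegative integers, $wt(\boldsymbol{i})=\sum_j i_j$. For $P\in\mathbb{F}_q[x_1,\dots,x_s]$, the $\boldsymbol{i}$-th Hasse derivative $P^{(\boldsymbol{i})}(\boldsymbol{x})$ is the coefficient of $\boldsymbol{z}^{\boldsymbol{i}}$ in $P(\boldsymbol{x}+\boldsymbol{z})$. Let $\Sigma=\mathbb{F}_q^{\binom{s+m-1}{s}}$ and $P^{(<m)}(\boldsymbol{w})=(P^{(\boldsymbol{i})}(\boldsymbol{w}))_{wt(\boldsymbol{i})<m}\in\Sigma$. The multiplicity code $\mathcal{C}(m,d,s,q)$ is the $\mathbb{F}_q$-linear code of length $q^s$ over the alphabet $\Sigma$ (of size $Q$), coordinates indexed by $\mathbb{F}_q^s$, consisting of $(P^{(<m)}(\boldsymbol{w}))_{\boldsymbol{w}\in\mathbb{F}_q^s}$ for all $P$ of total degree at most $d$; it is taken in systematic form, so that it encodes $n=\log_Q|\mathcal{C}|$ information symbols. An $[N,n,k]_Q^P$ code ($k$-PIR code) is a code of length $N$ over an alphabet of size $Q$ encoding $n$ information symbols such that for every information symbol $x_i$ there exist $k$ mutually disjoint sets $R_{i,1},\dots,R_{i,k}$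 of coordinates such that, for each $j$, $x_i$ is a function of the codeword symbols in $R_{i,j}$. *)

theory Defs
  imports Complex_Main "HOL-Library.FuncSet" "HOL-Library.Cardinality"
begin

text \<open>Points of F_q^s: functions nat => 'a vanishing outside {..<s}.\<close>
definition pts :: "nat \<Rightarrow> (nat \<Rightarrow> 'a::zero) set" where
  "pts s = {x. \<forall>j\<ge>s. x j = 0}"

definition mons :: "nat \<Rightarrow> nat \<Rightarrow> (nat \<Rightarrow> nat) set" where
  "mons s t = {e. (\<forall>j\<ge>s. e j = 0) \<and> (\<Sum>j<s. e j) < t}"

text \<open>Polynomials in s variables of total degree at most d, as coefficient functions.\<close>
definition polys :: "nat \<Rightarrow> nat \<Rightarrow> ((nat \<Rightarrow> nat) \<Rightarrow> 'a::zero) set" where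
  "polys s d = {c. \<forall>e. e \<notin> mons s (Suc d) \<longrightarrow> c e = 0}"

text \<open>The i-th Hasse derivative of P = sum_e c e x^e, evaluated at x: the coefficient
  of z^i in P(x+z), i.e. sum_e c e * prod_j (e_j choose i_j) x_j^(e_j - i_j).\<close>
definition hasse :: "nat \<Rightarrow> nat \<Rightarrow> ((nat \<Rightarrow> nat) \<Rightarrow> 'a::comm_ring_1)
    \<Rightarrow> (nat \<Rightarrow> nat) \<Rightarrow> (nat \<Rightarrow> 'a) \<Rightarrow> 'a" where
  "hasse s d c i x = (\<Sum>e\<in>mons s (Suc d). c e *
      (\<Prod>j<s. of_nat (e j choose i j) * x j ^ (e j - i j)))"

text \<open>Alphabet Sigma = F_q^{binom(s+m-1,s)}, indexed by multi-indices of weight < m.\<close>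
definition alphabet :: "nat \<Rightarrow> nat \<Rightarrow> ((nat \<Rightarrow> nat) \<Rightarrow> 'a) set" where
  "alphabet s m = PiE (mons s m) (\<lambda>_. UNIV)"

definition mult_codeword :: "nat \<Rightarrow> nat \<Rightarrow> nat \<Rightarrow> ((nat \<Rightarrow> nat) \<Rightarrow> 'a::comm_ring_1)
    \<Rightarrow> (nat \<Rightarrow> 'a) \<Rightarrow> ((nat \<Rightarrow> nat) \<Rightarrow> 'a)" where
  "mult_codeword m d s c = (\<lambda>w\<in>pts s. \<lambda>i\<in>mons s m. hasse s d c i w)"

text \<open>The multiplicity code C(m,d,s,q), q = CARD('a).\<close>
definition mult_code :: "nat \<Rightarrow> nat \<Rightarrow> nat \<Rightarrow>
    ((nat \<Rightarrow> 'a::{finite,field}) \<Rightarrow> ((nat \<Rightarrow> nat) \<Rightarrow> 'a)) set" where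
  "mult_code m d s = mult_codeword m d s ` polys s d"

text \<open>k-PIR property for a code with coordinate set I: every coordinate symbol is
  a function of the codeword symbols on each of k mutually disjoint sets of coordinates.\<close>
definition pir_recoverable :: "'i set \<Rightarrow> ('i \<Rightarrow> 'b) set \<Rightarrow> nat \<Rightarrow> 'i \<Rightarrow> bool" where
  "pir_recoverable I C k w \<longleftrightarrow>
     (\<exists>R :: nat \<Rightarrow> 'i set.
        (\<forall>j<k. R j \<subseteq> I) \<and>
        (\<forall>j<k. \<forall>j'<k. j \<noteq> j' \<longrightarrow> R j \<inter> R j' = {}) \<and>
        (\<forall>j<k. \<forall>c1\<in>C. \<forall>c2\<in>C. (\<forall>y\<in>R j. c1 y = c2 y) \<longrightarrow> c1 w = c2 w))"

end

theory Submission
  imports Defs "HOL-Computational_Algebra.Polynomial"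
begin

definition box :: "nat \<Rightarrow> (nat \<Rightarrow> nat) \<Rightarrow> (nat \<Rightarrow> nat) set" where
  "box s e = {a. (\<forall>j\<ge>s. a j = 0) \<and> (\<forall>j<s. a j \<le> e j)}"

lemma box_0: "box 0 e = {\<lambda>_. 0}"
  by (auto simp: box_def)

lemma box_Suc: "box (Suc s) e = (\<lambda>(a,k). a(s:=k)) ` (box s e \<times> {..e s})"
proof (intro equalityI subsetI)
  fix a assume a: "a \<in> box (Suc s) e"
  have "a = (\<lambda>(a,k). a(s:=k)) (a(s:=0), a s)" by auto
  moreover have "(a(s:=0), a s) \<in> box s e \<times> {..e s}"
    using a by (auto simp: box_def)
  ultimately show "a \<in> (\<lambda>(a,k). a(s:=k)) ` (box s e \<times> {..e s})" by blast
next
  fix a assume "a \<in> (\<lambda>(a,k). a(s:=k)) ` (box s e \<times> {..e s})"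
  then show "a \<in> box (Suc s) e" by (auto simp: box_def less_Suc_eq)
qed

lemma inj_box_Suc: "inj_on (\<lambda>(a,k). a(s:=k)) (box s e \<times> {..e s})"
  unfolding inj_on_def box_def
  by (auto simp: fun_eq_iff)

lemma finite_box: "finite (box s e)"
  by (induction s) (auto simp: box_0 box_Suc)

lemma prod_sum_box:
  fixes f :: "nat \<Rightarrow> nat \<Rightarrow> 'a::comm_semiring_1"
  shows "(\<Prod>j<s. \<Sum>k\<le>e j. f j k) = (\<Sum>a\<in>box s e. \<Prod>j<s. f j (a j))"
proof (induction s)
  case 0
  then show ?case by (simp add: box_0)
next
  case (Suc s)
  have "(\<Prod>j<Suc s. \<Sum>k\<le>e j. f j k) = (\<Sum>a\<in>box s e. \<Prod>j<s. f j (a j)) * (\<Sum>k\<le>e s. f s k)"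
    using Suc by simp
  also have "\<dots> = (\<Sum>(a,k)\<in>box s e \<times> {..e s}. (\<Prod>j<s. f j (a j)) * f s k)"
    by (simp add: sum_product sum.cartesian_product)
  also have "\<dots> = (\<Sum>(a,k)\<in>box s e \<times> {..e s}. (\<Prod>j<Suc s. f j ((a(s:=k)) j)))"
    by (intro sum.cong refl) (auto intro!: prod.cong)
  also have "\<dots> = (\<Sum>a\<in>box (Suc s) e. \<Prod>j<Suc s. f j (a j))"
    unfolding box_Suc using sum.reindex[OF inj_box_Suc, of "\<lambda>a. \<Prod>j<Suc s. f j (a j)" s e]
    by (simp add: case_prod_beta)
  finally show ?case .
qed


lemma card_supp:
  assumes "finite A"
  shows "card {f :: 'b \<Rightarrow> 'a::{finite,zero}. \<forall>x. x \<notin> A \<longrightarrow> f x = 0} = CARD('a) ^ card A"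
proof -
  have "bij_betw (\<lambda>f. restrict f A) {f :: 'b \<Rightarrow> 'a. \<forall>x. x \<notin> A \<longrightarrow> f x = 0} (PiE A (\<lambda>_. UNIV))"
  proof (rule bij_betwI[where g="\<lambda>f x. if x \<in> A then f x else 0"])
    show "(\<lambda>f. restrict f A) \<in> {f. \<forall>x. x \<notin> A \<longrightarrow> f x = 0} \<rightarrow> (A \<rightarrow>\<^sub>E UNIV)" by auto
    show "(\<lambda>f x. if x \<in> A then f x else 0) \<in> (A \<rightarrow>\<^sub>E UNIV) \<rightarrow> {f :: 'b \<Rightarrow> 'a. \<forall>x. x \<notin> A \<longrightarrow> f x = 0}" by auto
    show "\<And>x. x \<in> {f :: 'b \<Rightarrow> 'a. \<forall>x. x \<notin> A \<longrightarrow> f x = 0} \<Longrightarrow> (\<lambda>xa. if xa \<in> A then restrict x A xa else 0) = x"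
      by (auto simp: fun_eq_iff)
    show "\<And>y. y \<in> A \<rightarrow>\<^sub>E UNIV \<Longrightarrow> restrict (\<lambda>x. if x \<in> A then y x else 0) A = y"
      by (auto simp: fun_eq_iff PiE_def extensional_def)
  qed
  then have "card {f :: 'b \<Rightarrow> 'a. \<forall>x. x \<notin> A \<longrightarrow> f x = 0} = card (PiE A (\<lambda>_. UNIV :: 'a set))"
    by (rule bij_betw_same_card)
  also have "\<dots> = CARD('a) ^ card A" using assms by (simp add: card_PiE)
  finally show ?thesis .
qed

lemma pts_eq: "pts s = {x. \<forall>j. j \<notin> {..<s} \<longrightarrow> x j = 0}"
  by (auto simp: pts_def)

lemma card_pts: "card (pts s :: (nat \<Rightarrow> 'a::{finite,zero}) set) = CARD('a) ^ s"
  unfolding pts_eq by (subst card_supp) auto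

lemma mons_sub_box: "mons s t \<subseteq> box s (\<lambda>_. t)"
proof
  fix a assume "a \<in> mons s t"
  then have "\<forall>j\<ge>s. a j = 0" "(\<Sum>j<s. a j) < t" by (auto simp: mons_def)
  moreover have "\<forall>j<s. a j \<le> (\<Sum>j<s. a j)"
    by (auto intro!: member_le_sum)
  ultimately show "a \<in> box s (\<lambda>_. t)" by (auto simp: box_def)
qed

lemma finite_mons: "finite (mons s t)"
  using mons_sub_box finite_box by (rule finite_subset)

lemma mons_0: "mons 0 t = (if t > 0 then {\<lambda>_. 0} else {})"
  by (auto simp: mons_def)

lemma mons_Suc: "mons (Suc s) t = (\<lambda>(k,a). a(s:=k)) ` (SIGMA k:{..<t}. mons s (t - k))"
proof (intro equalityI subsetI)
  fix a assume a: "a \<in> mons (Suc s) t"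
  have "a = (\<lambda>(k,a). a(s:=k)) (a s, a(s:=0))" by auto
  moreover have "(\<Sum>j<s. a j) + a s < t" using a by (simp add: mons_def)
  moreover have "(\<Sum>j<s. (a(s:=0)) j) = (\<Sum>j<s. a j)" by (intro sum.cong) auto
  ultimately show "a \<in> (\<lambda>(k,a). a(s:=k)) ` (SIGMA k:{..<t}. mons s (t - k))"
    using a unfolding mons_def by (intro image_eqI[where x="(a s, a(s:=0))"]) auto
next
  fix b assume "b \<in> (\<lambda>(k,a). a(s:=k)) ` (SIGMA k:{..<t}. mons s (t - k))"
  then obtain k a where b: "b = a(s:=k)" "k < t" "a \<in> mons s (t - k)" by auto
  have "(\<Sum>j<s. (a(s:=k)) j) = (\<Sum>j<s. a j)" by (intro sum.cong) auto
  then show "b \<in> mons (Suc s) t" using b by (auto simp: mons_def)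
qed

lemma inj_mons_Suc: "inj_on (\<lambda>(k,a). a(s:=k)) (SIGMA k:{..<t}. mons s (t - k))"
  unfolding inj_on_def mons_def
  by (auto simp: fun_eq_iff)

lemma card_mons: "card (mons s (Suc T)) = (s + T choose s)"
proof (induction s arbitrary: T)
  case 0
  then show ?case by (simp add: mons_0)
next
  case (Suc s)
  have "card (mons (Suc s) (Suc T)) = card (SIGMA k:{..<Suc T}. mons s (Suc T - k))"
    unfolding mons_Suc by (rule card_image[OF inj_mons_Suc])
  also have "\<dots> = (\<Sum>k<Suc T. card (mons s (Suc T - k)))"
    by (simp add: card_SigmaI finite_mons)
  also have "\<dots> = (\<Sum>k<Suc T. card (mons s (Suc (T - k))))"
    by (intro sum.cong) (auto simp: Suc_diff_le)
  also have "\<dots> = (\<Sum>k<Suc T. s + (T - k) choose s)" using Suc by simp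
  also have "\<dots> = (\<Sum>k<Suc T. s + k choose s)"
    using sum.nat_diff_reindex[of "\<lambda>k. s + k choose s" "Suc T"] by simp
  also have "\<dots> = (\<Sum>k\<le>T. s + k choose k)"
    by (intro sum.cong) (auto simp: binomial_symmetric[of s "s+_"] lessThan_Suc_atMost)
  also have "\<dots> = Suc (s + T) choose T" by (rule sum_choose_lower)
  also have "\<dots> = Suc s + T choose Suc s"
    using binomial_symmetric[of T "Suc s + T"] by simp
  finally show ?case .
qed


lemma binomial_ring': "((x::'a::comm_ring_1) + y) ^ n = (\<Sum>k\<le>n. of_nat (n choose k) * x ^ (n - k) * y ^ k)"
  using binomial_ring[of y x n] by (simp add: add.commute mult_ac)

lemma box_sub_mons:
  assumes "e \<in> mons s N"
  shows "box s e \<subseteq> mons s N"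
proof
  fix a assume a: "a \<in> box s e"
  have "(\<Sum>j<s. a j) \<le> (\<Sum>j<s. e j)" using a by (intro sum_mono) (auto simp: box_def)
  then show "a \<in> mons s N" using a assms by (auto simp: box_def mons_def)
qed

lemma taylor:
  fixes c :: "(nat \<Rightarrow> nat) \<Rightarrow> 'a::comm_ring_1"
  shows "(\<Sum>e\<in>mons s (Suc D). c e * (\<Prod>j<s. (x j + y j) ^ e j))
       = (\<Sum>a\<in>mons s (Suc D). hasse s D c a x * (\<Prod>j<s. y j ^ a j))"
proof -
  define G where "G e a = (\<Prod>j<s. of_nat (e j choose a j) * x j ^ (e j - a j) * y j ^ a j)" for e a
  have L: "(\<Prod>j<s. (x j + y j) ^ e j) = (\<Sum>a\<in>box s e. G e a)" for e
    unfolding binomial_ring' G_def by (rule prod_sum_box)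
  have R: "hasse s D c a x * (\<Prod>j<s. y j ^ a j) = (\<Sum>e\<in>mons s (Suc D). c e * G e a)" for a
    unfolding hasse_def G_def sum_distrib_right
    by (intro sum.cong refl) (simp add: prod.distrib mult_ac)
  have B: "(\<Sum>a\<in>mons s (Suc D). G e a) = (\<Sum>a\<in>box s e. G e a)" if e: "e \<in> mons s (Suc D)" for e
  proof (rule sum.mono_neutral_right[OF finite_mons box_sub_mons[OF e]], rule ballI)
    fix a assume a: "a \<in> mons s (Suc D) - box s e"
    then obtain j where j: "j < s" "e j < a j" by (auto simp: box_def mons_def not_le)
    show "G e a = 0" unfolding G_def
      by (rule prod_zero) (use j in \<open>auto intro!: bexI[of _ j] simp: binomial_eq_0\<close>)
  qed
  have "(\<Sum>a\<in>mons s (Suc D). hasse s D c a x * (\<Prod>j<s. y j ^ a j))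
      = (\<Sum>a\<in>mons s (Suc D). \<Sum>e\<in>mons s (Suc D). c e * G e a)" by (simp add: R)
  also have "\<dots> = (\<Sum>e\<in>mons s (Suc D). c e * (\<Sum>a\<in>mons s (Suc D). G e a))"
    by (subst sum.swap) (simp add: sum_distrib_left)
  also have "\<dots> = (\<Sum>e\<in>mons s (Suc D). c e * (\<Prod>j<s. (x j + y j) ^ e j))"
    by (intro sum.cong refl) (simp add: B L)
  finally show ?thesis by simp
qed

lemma hasse_mono:
  assumes "\<forall>e. e \<notin> mons s (Suc D1) \<longrightarrow> c e = 0" "D1 \<le> D2"
  shows "hasse s D1 c i x = hasse s D2 c i x"
  unfolding hasse_def
  by (rule sum.mono_neutral_left[OF finite_mons]) (use assms in \<open>auto simp: mons_def\<close>)


lemma sum_count_le_size: "finite T \<Longrightarrow> (\<Sum>t\<in>T. count P t) \<le> size P"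
proof (induction P)
  case empty then show ?case by simp
next
  case (add x P)
  have "(\<Sum>t\<in>T. count (add_mset x P) t) = (\<Sum>t\<in>T. count P t) + (\<Sum>t\<in>T. if t = x then 1 else 0)"
    by (simp add: sum.distrib[symmetric]) (intro sum.cong, auto)
  also have "(\<Sum>t\<in>T. if t = x then 1 else 0) \<le> (1::nat)"
    using add.prems by (simp add: sum.If_cases)
  finally show ?case using add by simp
qed

lemma pcompose_monom1: "pcompose (monom 1 n) p = p ^ n"
  by (induction n) (simp_all add: monom_Suc pcompose_pCons monom_0 one_pCons)

lemma uni_roots:
  fixes g :: "'a::field poly"
  assumes T: "finite T" and Z: "\<forall>t\<in>T. \<forall>b<M. coeff (pcompose g [:t,1:]) b = 0"
    and deg: "degree g < M * card T"
  shows "g = 0"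
proof (rule ccontr)
  assume g: "g \<noteq> 0"
  have ord: "M \<le> order t g" if t: "t \<in> T" for t
  proof -
    have "monom 1 M dvd pcompose g [:t,1:]" using Z t by (simp add: monom_1_dvd_iff')
    then obtain k where k: "pcompose g [:t,1:] = monom 1 M * k" by (auto simp: dvd_def)
    have "pcompose [:t,1:] [:-t,1:] = [:0,1:]" by (simp add: pcompose_pCons)
    then have "g = pcompose (pcompose g [:t,1:]) [:-t,1:]"
      by (metis pcompose_assoc pcompose_idR)
    also have "\<dots> = [:-t,1:] ^ M * pcompose k [:-t,1:]"
      by (simp add: k pcompose_mult pcompose_monom1)
    finally have "[:-t,1:] ^ M dvd g" by (metis dvd_triv_left)
    then show ?thesis using g by (simp add: order_divides)
  qed
  have "M * card T = (\<Sum>t\<in>T. M)" by simp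
  also have "\<dots> \<le> (\<Sum>t\<in>T. order t g)" by (intro sum_mono ord)
  also have "\<dots> = (\<Sum>t\<in>T. count (proots g) t)" using g by simp
  also have "\<dots> \<le> size (proots g)" by (rule sum_count_le_size[OF T])
  also have "\<dots> \<le> degree g" by (rule size_proots_le)
  finally show False using deg by simp
qed


definition ck :: "((nat \<Rightarrow> nat) \<Rightarrow> 'a::zero) \<Rightarrow> nat \<Rightarrow> nat \<Rightarrow> (nat \<Rightarrow> nat) \<Rightarrow> 'a" where
  "ck c s k = (\<lambda>e. if e s = 0 then c (e(s:=k)) else 0)"

lemma hasse_split:
  fixes c :: "(nat \<Rightarrow> nat) \<Rightarrow> 'a::comm_ring_1"
  assumes supp: "\<forall>e. e \<notin> mons (Suc s) (Suc D) \<longrightarrow> c e = 0"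
  shows "hasse (Suc s) D c (a(s:=b)) (w(s:=y))
       = (\<Sum>k\<le>D. hasse s D (ck c s k) a w * (of_nat (k choose b) * y ^ (k - b)))"
proof -
  define F where "F e' = (\<Prod>j<s. of_nat (e' j choose a j) * w j ^ (e' j - a j))" for e'
  have P: "(\<Prod>j<Suc s. of_nat ((e'(s:=k)) j choose (a(s:=b)) j) * (w(s:=y)) j ^ ((e'(s:=k)) j - (a(s:=b)) j))
        = F e' * (of_nat (k choose b) * y ^ (k - b))" for e' k
    unfolding F_def by (simp add: lessThan_Suc)
  have "hasse (Suc s) D c (a(s:=b)) (w(s:=y))
     = (\<Sum>(k,e')\<in>(SIGMA k:{..<Suc D}. mons s (Suc D - k)). c (e'(s:=k)) * (F e' * (of_nat (k choose b) * y ^ (k - b))))"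
    unfolding hasse_def mons_Suc[of s]
    by (subst sum.reindex[OF inj_mons_Suc]) (simp add: case_prod_beta P F_def)
  also have "\<dots> = (\<Sum>k<Suc D. \<Sum>e'\<in>mons s (Suc D - k). c (e'(s:=k)) * (F e' * (of_nat (k choose b) * y ^ (k - b))))"
    by (subst sum.Sigma) (auto simp: finite_mons)
  also have "\<dots> = (\<Sum>k\<le>D. hasse s D (ck c s k) a w * (of_nat (k choose b) * y ^ (k - b)))"
  proof (intro sum.cong)
    show "{..<Suc D} = {..D}" by auto
  next
    fix k assume k: "k \<in> {..D}"
    have "hasse s D (ck c s k) a w * (of_nat (k choose b) * y ^ (k - b))
        = (\<Sum>e'\<in>mons s (Suc D). c (e'(s:=k)) * (F e' * (of_nat (k choose b) * y ^ (k - b))))"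
      unfolding hasse_def F_def ck_def sum_distrib_right
      by (intro sum.cong refl) (auto simp: mons_def mult_ac)
    also have "\<dots> = (\<Sum>e'\<in>mons s (Suc D - k). c (e'(s:=k)) * (F e' * (of_nat (k choose b) * y ^ (k - b))))"
    proof (rule sum.mono_neutral_right[OF finite_mons])
      show "mons s (Suc D - k) \<subseteq> mons s (Suc D)" by (auto simp: mons_def)
      show "\<forall>e'\<in>mons s (Suc D) - mons s (Suc D - k). c (e'(s:=k)) * (F e' * (of_nat (k choose b) * y ^ (k - b))) = 0"
      proof
        fix e' assume e': "e' \<in> mons s (Suc D) - mons s (Suc D - k)"
        have "(\<Sum>j<s. (e'(s:=k)) j) = (\<Sum>j<s. e' j)" by (intro sum.cong) auto
        then have "e'(s:=k) \<notin> mons (Suc s) (Suc D)" using e' k by (auto simp: mons_def)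
        then show "c (e'(s:=k)) * (F e' * (of_nat (k choose b) * y ^ (k - b))) = 0" using supp by simp
      qed
    qed
    finally show "(\<Sum>e'\<in>mons s (Suc D - k). c (e'(s:=k)) * (F e' * (of_nat (k choose b) * y ^ (k - b))))
       = hasse s D (ck c s k) a w * (of_nat (k choose b) * y ^ (k - b))" by simp
  qed
  finally show ?thesis .
qed

lemma pcompose_X_pow: "pcompose ([:0,1:] ^ n) p = p ^ n"
  using pcompose_monom1[of n p] by (simp add: monom_altdef)

lemma coeff_pcompose_sum_monom:
  fixes h :: "nat \<Rightarrow> 'a::comm_ring_1"
  shows "coeff (pcompose (\<Sum>k\<le>D. monom (h k) k) [:y,1:]) b = (\<Sum>k\<le>D. h k * (of_nat (k choose b) * y ^ (k - b)))"
proof -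
  have "coeff ([:y,1:] ^ k) b = of_nat (k choose b) * y ^ (k - b)" for k
  proof (cases "b \<le> k")
    case True then show ?thesis by (simp add: coeff_linear_poly_power)
  next
    case False
    then have "degree ([:y,1:] ^ k) < b" using degree_power_le[of "[:y,1:]" k] by auto
    then show ?thesis using False by (simp add: coeff_eq_0 binomial_eq_0)
  qed
  then show ?thesis
    by (simp add: pcompose_sum monom_altdef pcompose_smult pcompose_X_pow coeff_sum)
qed


definition grid :: "(nat \<Rightarrow> 'a set) \<Rightarrow> nat \<Rightarrow> (nat \<Rightarrow> 'a::zero) set" where
  "grid S s = {w. (\<forall>j<s. w j \<in> S j) \<and> (\<forall>j\<ge>s. w j = 0)}"

lemma wt_upd: "(\<Sum>j<Suc s. (e(s:=k)) j) = (\<Sum>j<s. e j) + k"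
proof -
  have "(\<Sum>j<s. (e(s:=k)) j) = (\<Sum>j<s. e j)" by (intro sum.cong) auto
  then show ?thesis by simp
qed

lemma hasse_zero_fun[simp]: "hasse s D (\<lambda>_. 0) i x = 0"
  by (simp add: hasse_def)

lemma grid_zero:
  fixes c :: "(nat \<Rightarrow> nat) \<Rightarrow> 'a::field"
  assumes "\<forall>j<s. n \<le> card (S j)" "D < M * n"
    "\<forall>e. e \<notin> mons s (Suc D) \<longrightarrow> c e = 0"
    "\<forall>w\<in>grid S s. \<forall>i\<in>mons s M. hasse s D c i w = 0"
  shows "c = (\<lambda>_. 0)"
  using assms
proof (induction s arbitrary: M D c)
  case 0
  have M: "M > 0" using "0.prems"(2) by (cases M) auto
  have z: "(\<lambda>_. 0::nat) \<in> mons 0 M" "(\<lambda>_. 0::'a) \<in> grid S 0" using M by (auto simp: mons_def grid_def)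
  have "hasse 0 D c (\<lambda>_. 0) (\<lambda>_. 0) = c (\<lambda>_. 0)" by (simp add: hasse_def mons_0)
  then have "c (\<lambda>_. 0) = 0" using "0.prems"(4) z by auto
  then show ?case using "0.prems"(3)
  proof -
    have "c x = 0" for x
    proof (cases "x = (\<lambda>_. 0)")
      case False
      then obtain j where "x j \<noteq> 0" by auto
      then show ?thesis using "0.prems"(3) False by (auto simp: mons_0)
    qed (use \<open>c (\<lambda>_. 0) = 0\<close> in auto)
    then show ?thesis by auto
  qed
next
  case (Suc s)
  note supp = Suc.prems(3)
  show ?case
  proof (rule ccontr)
    assume c0: "c \<noteq> (\<lambda>_. 0)"
    define E where "E = {e. c e \<noteq> 0}"
    have EM: "E \<subseteq> mons (Suc s) (Suc D)" using supp by (auto simp: E_def)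
    have finE: "finite E" using EM finite_mons finite_subset by blast
    have Ene: "E \<noteq> {}" using c0 by (auto simp: E_def fun_eq_iff)
    define t where "t = Max ((\<lambda>e. e s) ` E)"
    have "t \<in> (\<lambda>e. e s) ` E" unfolding t_def using finE Ene by (intro Max_in) auto
    then obtain e0 where e0: "e0 \<in> E" "e0 s = t" by auto
    have tmax: "e s \<le> t" if "e \<in> E" for e unfolding t_def using finE that by auto
    have tD: "t \<le> D"
    proof -
      have "e0 s \<le> (\<Sum>j<Suc s. e0 j)" by (rule member_le_sum) auto
      then show ?thesis using EM e0 by (auto simp: mons_def)
    qed
    have n0: "n > 0" using Suc.prems(2) by (cases n) auto
    define ct where "ct = ck c s t"
    have ct0: "ct \<noteq> (\<lambda>_. 0)"
    proof
      assume "ct = (\<lambda>_. 0)"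
      then have "ct (e0(s:=0)) = 0" by simp
      moreover have "(e0(s:=0))(s:=t) = e0" using e0 by auto
      ultimately show False using e0 by (auto simp: ct_def ck_def E_def)
    qed
    have ctsupp: "\<forall>e. e \<notin> mons s (Suc (D - t)) \<longrightarrow> ct e = 0"
    proof (intro allI impI)
      fix e assume e: "e \<notin> mons s (Suc (D - t))"
      show "ct e = 0"
      proof (rule ccontr)
        assume ne: "ct e \<noteq> 0"
        then have es: "e s = 0" and ce: "c (e(s:=t)) \<noteq> 0" by (auto simp: ct_def ck_def split: if_splits)
        then have m: "e(s:=t) \<in> mons (Suc s) (Suc D)" using supp by blast
        have "(\<Sum>j<Suc s. (e(s:=t)) j) = (\<Sum>j<s. e j) + t"
          by (rule wt_upd)
        then have "(\<Sum>j<s. e j) < Suc (D - t)" using m tD by (auto simp: mons_def)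
        moreover have "\<forall>j\<ge>s. e j = 0"
          using m es by (auto simp: mons_def) (metis Suc_leI fun_upd_other le_neq_implies_less)
        ultimately show False using e by (auto simp: mons_def)
      qed
    qed
    have ckbig: "ck c s k = (\<lambda>_. 0)" if "t < k" for k
    proof
      fix e
      show "ck c s k e = 0"
      proof (rule ccontr)
        assume "ck c s k e \<noteq> 0"
        then have "e(s:=k) \<in> E" by (auto simp: ck_def E_def split: if_splits)
        then show False using tmax[of "e(s:=k)"] that by simp
      qed
    qed
    have tM: "t div n < M" using tD Suc.prems(2) n0
      by (meson div_less_iff_less_mult le_less_trans)
    define M' where "M' = M - t div n"
    have vanish: "\<forall>w\<in>grid S s. \<forall>i\<in>mons s M'. hasse s (D - t) ct i w = 0"
    proof (intro ballI, rule ccontr)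
      fix w a assume w: "w \<in> grid S s" and a: "a \<in> mons s M'" and nz: "hasse s (D - t) ct a w \<noteq> 0"
      define r where "r = (\<Sum>j<s. a j)"
      have rM: "r < M'" using a by (simp add: mons_def r_def)
      define h where "h k = hasse s D (ck c s k) a w" for k
      define g where "g = (\<Sum>k\<le>D. monom (h k) k)"
      have coeffg: "coeff g i = (if i \<le> D then h i else 0)" for i
        unfolding g_def coeff_sum by (simp add: coeff_monom)
      have ht: "h t \<noteq> 0" using nz hasse_mono[OF ctsupp, of D a w] by (simp add: h_def ct_def)
      have g0: "g \<noteq> 0" using coeffg[of t] tD ht by auto
      have degg: "degree g \<le> t"
        by (rule degree_le) (auto simp: coeffg h_def ckbig)
      have cardS: "n \<le> card (S s)" using Suc.prems(1) by auto
      then have finS: "finite (S s)" using n0 by (metis card.infinite not_gr0 le_0_eq)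
      have zero: "\<forall>y\<in>S s. \<forall>b<M - r. coeff (pcompose g [:y,1:]) b = 0"
      proof (intro ballI allI impI)
        fix y b assume y: "y \<in> S s" and b: "b < M - r"
        have "coeff (pcompose g [:y,1:]) b = hasse (Suc s) D c (a(s:=b)) (w(s:=y))"
          unfolding g_def coeff_pcompose_sum_monom hasse_split[OF supp] h_def by simp
        also have "\<dots> = 0"
        proof -
          have "w(s:=y) \<in> grid S (Suc s)" using w y by (auto simp: grid_def less_Suc_eq)
          moreover have "(\<Sum>j<Suc s. (a(s:=b)) j) = r + b"
            unfolding r_def by (rule wt_upd)
          then have "a(s:=b) \<in> mons (Suc s) M" using a b by (auto simp: mons_def)
          ultimately show ?thesis using Suc.prems(4) by blast
        qed
        finally show "coeff (pcompose g [:y,1:]) b = 0" .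
      qed
      have "t < (t div n + 1) * n" using n0
        by (metis add.commute div_mult_mod_eq mod_less_divisor mult.commute mult_Suc_right nat_add_left_cancel_less plus_1_eq_Suc)
      also have "\<dots> \<le> (M - r) * n" using rM unfolding M'_def by (intro mult_right_mono) auto
      also have "\<dots> \<le> (M - r) * card (S s)" using cardS by simp
      finally have "degree g < (M - r) * card (S s)" using degg by simp
      then have "g = 0" using uni_roots[OF finS zero] by simp
      then show False using g0 by simp
    qed
    have "D - t < M' * n"
    proof -
      have "(t div n) * n \<le> t" by (metis div_mult_mod_eq le_add1)
      then have "D - t + (t div n) * n < M * n" using Suc.prems(2) tD by linarith
      then show ?thesis unfolding M'_def by (simp add: diff_mult_distrib)
    qed
    then have "ct = (\<lambda>_. 0)"
      using Suc.IH[of "D - t" M' ct] Suc.prems(1) ctsupp vanish by auto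
    then show False using ct0 by simp
  qed
qed


lemma hasse_const_poly:
  "hasse s D (\<lambda>e. [:c e:]) a (\<lambda>j. [:u j:]) = [:hasse s D c a u:]"
  unfolding hasse_def by (simp add: of_nat_poly poly_const_pow prod_to_poly sum_to_poly mult_ac)

lemma prod_monom_lin:
  fixes s :: nat
  shows "(\<Prod>j<s. [:0, v j:] ^ a j) = monom (\<Prod>j<s. v j ^ a j) (\<Sum>j<s. a j)"
proof (induction s)
  case 0 then show ?case by (simp add: one_pCons monom_0)
next
  case (Suc s)
  have "[:0, v s:] = monom (v s) 1" by (simp add: monom_Suc monom_0)
  then show ?case using Suc by (simp add: monom_power mult_monom mult_ac add.commute)
qed

lemma pcompose_power: "pcompose (p ^ n) r = (pcompose p r) ^ n"
  by (induction n) (simp_all add: pcompose_1 pcompose_mult)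

definition lineQ :: "nat \<Rightarrow> nat \<Rightarrow> ((nat \<Rightarrow> nat) \<Rightarrow> 'a::comm_ring_1) \<Rightarrow> (nat \<Rightarrow> 'a) \<Rightarrow> (nat \<Rightarrow> 'a) \<Rightarrow> 'a poly" where
  "lineQ s D c u v = (\<Sum>e\<in>mons s (Suc D). smult (c e) (\<Prod>j<s. [:u j, v j:] ^ e j))"

lemma coeff_lineQ:
  "coeff (lineQ s D c u v) b = (\<Sum>a\<in>{a\<in>mons s (Suc D). (\<Sum>j<s. a j) = b}. hasse s D c a u * (\<Prod>j<s. v j ^ a j))"
proof -
  have "lineQ s D c u v = (\<Sum>e\<in>mons s (Suc D). [:c e:] * (\<Prod>j<s. ([:u j:] + [:0, v j:]) ^ e j))"
    unfolding lineQ_def by (intro sum.cong refl) simp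
  also have "\<dots> = (\<Sum>a\<in>mons s (Suc D). [:hasse s D c a u:] * (\<Prod>j<s. [:0, v j:] ^ a j))"
    by (subst taylor) (simp add: hasse_const_poly)
  also have "\<dots> = (\<Sum>a\<in>mons s (Suc D). monom (hasse s D c a u * (\<Prod>j<s. v j ^ a j)) (\<Sum>j<s. a j))"
    by (intro sum.cong refl) (simp add: prod_monom_lin smult_monom)
  finally have "coeff (lineQ s D c u v) b = (\<Sum>a\<in>mons s (Suc D). if (\<Sum>j<s. a j) = b then hasse s D c a u * (\<Prod>j<s. v j ^ a j) else 0)"
    by (simp add: coeff_sum coeff_monom eq_commute)
  then show ?thesis by (simp add: sum.inter_filter[OF finite_mons])
qed

lemma pcompose_lineQ:
  "pcompose (lineQ s D c w v) [:t,1:] = lineQ s D c (\<lambda>j. w j + t * v j) v"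
proof -
  have "pcompose [:w j, v j:] [:t,1:] = [:w j + t * v j, v j:]" for j
    by (simp add: pcompose_pCons algebra_simps)
  then show ?thesis
    unfolding lineQ_def by (simp add: pcompose_sum pcompose_smult pcompose_prod pcompose_power)
qed

lemma degree_lineQ: "degree (lineQ s D c u v) \<le> D"
  unfolding lineQ_def
proof (rule degree_sum_le[OF finite_mons])
  fix e assume e: "e \<in> mons s (Suc D)"
  have "degree (\<Prod>j<s. [:u j, v j:] ^ e j) \<le> (\<Sum>j<s. degree ([:u j, v j:] ^ e j))"
    using degree_prod_sum_le[of "{..<s}" "\<lambda>j. [:u j, v j:] ^ e j"] by (simp add: o_def)
  also have "\<dots> \<le> (\<Sum>j<s. e j)"
  proof (rule sum_mono)
    fix j
    have "degree ([:u j, v j:] ^ e j) \<le> degree [:u j, v j:] * e j" by (rule degree_power_le)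
    also have "\<dots> \<le> e j" by simp
    finally show "degree ([:u j, v j:] ^ e j) \<le> e j" .
  qed
  also have "\<dots> \<le> D" using e by (simp add: mons_def)
  finally show "degree (smult (c e) (\<Prod>j<s. [:u j, v j:] ^ e j)) \<le> D"
    using degree_smult_le order_trans by blast
qed

lemma line_vanish:
  fixes c :: "(nat \<Rightarrow> nat) \<Rightarrow> 'a::{finite,field}"
  assumes dm: "D < M * (CARD('a) - 1)"
    and van: "\<forall>t. t \<noteq> 0 \<longrightarrow> (\<forall>i\<in>mons s M. hasse s D c i (\<lambda>j. w j + t * v j) = 0)"
  shows "(\<Sum>a\<in>{a\<in>mons s (Suc D). (\<Sum>j<s. a j) = b}. hasse s D c a w * (\<Prod>j<s. v j ^ a j)) = 0"
proof -
  have "lineQ s D c w v = 0"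
  proof (rule uni_roots[where T="UNIV - {0}" and M=M])
    show "finite (UNIV - {0::'a})" by simp
    show "degree (lineQ s D c w v) < M * card (UNIV - {0::'a})"
      using degree_lineQ[of s D c w v] dm by (simp add: card_Diff_singleton)
    show "\<forall>t\<in>UNIV - {0}. \<forall>b<M. coeff (pcompose (lineQ s D c w v) [:t, 1:]) b = 0"
    proof (intro ballI allI impI)
      fix t :: 'a and b assume t: "t \<in> UNIV - {0}" and b: "b < M"
      show "coeff (pcompose (lineQ s D c w v) [:t, 1:]) b = 0"
        unfolding pcompose_lineQ coeff_lineQ
      proof (rule sum.neutral, rule ballI)
        fix a assume a: "a \<in> {a\<in>mons s (Suc D). (\<Sum>j<s. a j) = b}"
        then have "a \<in> mons s M" using b by (auto simp: mons_def)
        then show "hasse s D c a (\<lambda>j. w j + t * v j) * (\<Prod>j<s. v j ^ a j) = 0"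
          using van t by auto
      qed
    qed
  qed
  then show ?thesis using coeff_lineQ[of s D c w v b] by simp
qed


lemma hasse_high:
  assumes "D < (\<Sum>j<s. a j)"
  shows "hasse s D c a x = 0"
  unfolding hasse_def
proof (rule sum.neutral, rule ballI)
  fix e assume e: "e \<in> mons s (Suc D)"
  have "\<exists>j<s. e j < a j"
  proof (rule ccontr)
    assume "\<not> (\<exists>j<s. e j < a j)"
    then have "(\<Sum>j<s. a j) \<le> (\<Sum>j<s. e j)" by (intro sum_mono) (meson not_less lessThan_iff)
    then show False using e assms by (auto simp: mons_def)
  qed
  then obtain j where j: "j < s" "e j < a j" by auto
  have "(\<Prod>j<s. of_nat (e j choose a j) * x j ^ (e j - a j)) = 0"
    by (rule prod_zero) (use j in \<open>auto intro!: bexI[of _ j] simp: binomial_eq_0\<close>)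
  then show "c e * (\<Prod>j<s. of_nat (e j choose a j) * x j ^ (e j - a j)) = 0" by simp
qed

definition phi :: "nat \<Rightarrow> nat \<Rightarrow> (nat \<Rightarrow> nat) \<Rightarrow> (nat \<Rightarrow> nat)" where
  "phi s1 b e = e(s1 := b - (\<Sum>j<s1. e j))"

lemma phi_inv1:
  assumes a: "a \<in> {a\<in>mons (Suc s1) (Suc D). (\<Sum>j<Suc s1. a j) = b}"
  shows "a(s1:=0) \<in> mons s1 (Suc b)"
proof -
  have "(\<Sum>j<Suc s1. (a(s1:=0)) j) = (\<Sum>j<s1. a j)" using wt_upd[of a s1 0] by simp
  moreover have "(\<Sum>j<Suc s1. (a(s1:=0)) j) = (\<Sum>j<s1. (a(s1:=0)) j)" by simp
  ultimately show ?thesis using a by (auto simp: mons_def)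
qed

lemma phi_inv2:
  assumes a: "a \<in> {a\<in>mons (Suc s1) (Suc D). (\<Sum>j<Suc s1. a j) = b}"
  shows "phi s1 b (a(s1 := 0)) = a"
proof -
  have "(\<Sum>j<s1. (a(s1:=0)) j) = (\<Sum>j<s1. a j)" by (intro sum.cong) auto
  moreover have "(\<Sum>j<Suc s1. a j) = (\<Sum>j<s1. a j) + a s1" by simp
  ultimately show ?thesis using a by (auto simp: phi_def fun_eq_iff)
qed

lemma phi_bij:
  assumes "b \<le> D"
  shows "bij_betw (phi s1 b) (mons s1 (Suc b)) {a\<in>mons (Suc s1) (Suc D). (\<Sum>j<Suc s1. a j) = b}"
proof (rule bij_betwI[where g="\<lambda>a. a(s1:=0)"])
  show "phi s1 b \<in> mons s1 (Suc b) \<rightarrow> {a \<in> mons (Suc s1) (Suc D). (\<Sum>j<Suc s1. a j) = b}"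
  proof
    fix e assume e: "e \<in> mons s1 (Suc b)"
    have "(\<Sum>j<Suc s1. phi s1 b e j) = (\<Sum>j<s1. e j) + (b - (\<Sum>j<s1. e j))"
      unfolding phi_def by (rule wt_upd)
    also have "\<dots> = b" using e by (simp add: mons_def)
    finally show "phi s1 b e \<in> {a \<in> mons (Suc s1) (Suc D). (\<Sum>j<Suc s1. a j) = b}"
      using e assms by (auto simp: mons_def phi_def)
  qed
  show "(\<lambda>a. a(s1 := 0)) \<in> {a \<in> mons (Suc s1) (Suc D). (\<Sum>j<Suc s1. a j) = b} \<rightarrow> mons s1 (Suc b)"
    using phi_inv1 by blast
  show "(phi s1 b e)(s1 := 0) = e" if "e \<in> mons s1 (Suc b)" for e
    using that by (auto simp: phi_def mons_def fun_eq_iff)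
  show "phi s1 b (a(s1 := 0)) = a" if a: "a \<in> {a \<in> mons (Suc s1) (Suc D). (\<Sum>j<Suc s1. a j) = b}" for a
    using phi_inv2[OF a] .
qed

lemma recover:
  fixes c :: "(nat \<Rightarrow> nat) \<Rightarrow> 'a::{finite,field}"
  assumes dm: "d < m * (CARD('a) - 1)"
    and S: "\<forall>j<s1. m \<le> card (S j)"
    and van: "\<forall>v'\<in>grid S s1. \<forall>t. t \<noteq> 0 \<longrightarrow>
               (\<forall>i\<in>mons (Suc s1) m. hasse (Suc s1) d c i (\<lambda>j. w j + t * (v'(s1:=1)) j) = 0)"
  shows "\<forall>i\<in>mons (Suc s1) m. hasse (Suc s1) d c i w = 0"
proof
  fix i assume i: "i \<in> mons (Suc s1) m"
  define b where "b = (\<Sum>j<Suc s1. i j)"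
  have bm: "b < m" using i by (simp add: b_def mons_def)
  show "hasse (Suc s1) d c i w = 0"
  proof (cases "d < b")
    case True then show ?thesis by (simp add: b_def hasse_high)
  next
    case False
    then have bd: "b \<le> d" by simp
    define h where "h e = (if e \<in> mons s1 (Suc b) then hasse (Suc s1) d c (phi s1 b e) w else 0)" for e
    have hv: "\<forall>v'\<in>grid S s1. \<forall>i'\<in>mons s1 1. hasse s1 b h i' v' = 0"
    proof (intro ballI)
      fix v' :: "nat \<Rightarrow> 'a" and i' assume v': "v' \<in> grid S s1" and i': "i' \<in> mons s1 1"
      have i'0: "i' = (\<lambda>_. 0)" using i' by (auto simp: mons_def fun_eq_iff) (metis leI lessThan_iff)
      have "hasse s1 b h i' v' = (\<Sum>e\<in>mons s1 (Suc b). h e * (\<Prod>j<s1. v' j ^ e j))"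
        unfolding hasse_def i'0 by simp
      also have "\<dots> = (\<Sum>e\<in>mons s1 (Suc b). hasse (Suc s1) d c (phi s1 b e) w * (\<Prod>j<Suc s1. (v'(s1:=1)) j ^ (phi s1 b e) j))"
        by (intro sum.cong refl) (simp add: h_def phi_def)
      also have "\<dots> = (\<Sum>a\<in>{a\<in>mons (Suc s1) (Suc d). (\<Sum>j<Suc s1. a j) = b}. hasse (Suc s1) d c a w * (\<Prod>j<Suc s1. (v'(s1:=1)) j ^ a j))"
        by (rule sum.reindex_bij_betw[OF phi_bij[OF bd]])
      also have "\<dots> = 0"
        by (rule line_vanish[OF dm]) (use van v' in auto)
      finally show "hasse s1 b h i' v' = 0" .
    qed
    have hsupp: "\<forall>e. e \<notin> mons s1 (Suc b) \<longrightarrow> h e = 0" by (simp add: h_def)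
    have "h = (\<lambda>_. 0)"
      by (rule grid_zero[OF S _ hsupp hv]) (use bm in simp)
    moreover have "i(s1:=0) \<in> mons s1 (Suc b)" "phi s1 b (i(s1:=0)) = i"
    proof -
      have "i \<in> {a\<in>mons (Suc s1) (Suc d). (\<Sum>j<Suc s1. a j) = b}"
        using i bd by (auto simp: b_def mons_def)
      then show "i(s1:=0) \<in> mons s1 (Suc b)" "phi s1 b (i(s1:=0)) = i"
        by (rule phi_inv1, rule phi_inv2)
    qed
    ultimately show ?thesis unfolding h_def by (metis (no_types, lifting))
  qed
qed


lemma hasse_diff:
  "hasse s D (\<lambda>e. c1 e - c2 e) i x = hasse s D c1 i x - hasse s D c2 i x"
  unfolding hasse_def by (simp add: sum_subtractf[symmetric] left_diff_distrib)

lemma div_in_block: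
  assumes "l * m \<le> (a::nat)" "a < l * m + m"
  shows "a div m = l"
proof -
  have m: "m > 0" using assms by auto
  show ?thesis using assms m
    by (metis add.commute div_nat_eqI mult.commute mult_Suc_right)
qed

lemma blocks:
  fixes f :: "nat \<Rightarrow> 'a"
  assumes f: "bij_betw f {0..<q} UNIV" and mn: "n * m \<le> q" and m: "m > 0"
  shows "\<And>l. l < n \<Longrightarrow> card (f ` {l*m..<l*m+m}) = m"
    and "\<And>l l'. l < n \<Longrightarrow> l' < n \<Longrightarrow> l \<noteq> l' \<Longrightarrow> f ` {l*m..<l*m+m} \<inter> f ` {l'*m..<l'*m+m} = {}"
proof -
  have sub: "{l*m..<l*m+m} \<subseteq> {0..<q}" if "l < n" for l
  proof -
    have "l * m + m \<le> n * m" using that by (metis add.commute mult_Suc mult_le_mono1 Suc_leI)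
    then show ?thesis using mn by auto
  qed
  have inj: "inj_on f {0..<q}" using f by (simp add: bij_betw_def)
  show "card (f ` {l*m..<l*m+m}) = m" if "l < n" for l
    using card_image[OF inj_on_subset[OF inj sub[OF that]]] by simp
  show "f ` {l*m..<l*m+m} \<inter> f ` {l'*m..<l'*m+m} = {}" if "l < n" "l' < n" "l \<noteq> l'" for l l'
  proof (rule ccontr)
    assume "f ` {l*m..<l*m+m} \<inter> f ` {l'*m..<l'*m+m} \<noteq> {}"
    then obtain a a' where a: "a \<in> {l*m..<l*m+m}" "a' \<in> {l'*m..<l'*m+m}" "f a = f a'" by blast
    then have "a = a'" using inj sub that by (meson inj_onD subsetD)
    then show False using a that div_in_block[of l m a] div_in_block[of l' m a'] by auto
  qed
qed


theorem theorem2: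
  fixes m d s :: nat
  assumes "m > 0" and "d > 0" and "s > 0"
    and "real d / real m < real CARD('a::{finite,field}) - 1"
  shows "card (pts s :: (nat \<Rightarrow> 'a) set) = CARD('a) ^ s
     \<and> card (alphabet s m :: ((nat \<Rightarrow> nat) \<Rightarrow> 'a) set) = CARD('a) ^ (s + m - 1 choose s)
     \<and> mult_code m d s \<subseteq> PiE (pts s) (\<lambda>_. alphabet s m :: ((nat \<Rightarrow> nat) \<Rightarrow> 'a) set)
     \<and> card (mult_code m d s :: ((nat \<Rightarrow> 'a) \<Rightarrow> ((nat \<Rightarrow> nat) \<Rightarrow> 'a)) set)
         = CARD('a) ^ (d + s choose s)
     \<and> (\<forall>w \<in> pts s. pir_recoverable (pts s) (mult_code m d s :: ((nat \<Rightarrow> 'a) \<Rightarrow> ((nat \<Rightarrow> nat) \<Rightarrow> 'a)) set)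
                       ((CARD('a) div m) ^ (s - 1)) w)"
proof -
  define q where "q = CARD('a)"
  have q1: "q \<ge> 1" unfolding q_def by (simp add: Suc_leI)
  have dm: "d < m * (q - 1)"
  proof -
    have qq: "real q - 1 = real (q - 1)" using q1 by (simp add: of_nat_diff)
    have A: "real d / real m < real (q - 1)" using assms(4) unfolding q_def qq[unfolded q_def] .
    have "real d < real (q - 1) * real m"
      by (rule pos_divide_less_eq[THEN iffD1, OF _ A]) (use assms(1) in simp)
    then have "d < (q - 1) * m" by (metis of_nat_less_iff of_nat_mult)
    then show ?thesis by (simp add: mult.commute)
  qed
  have "m * (q - 1) \<le> m * q" by (intro mult_le_mono2) simp
  then have dmq: "d < m * q" using dm by linarith
  have P1: "card (pts s :: (nat \<Rightarrow> 'a) set) = CARD('a) ^ s" by (rule card_pts)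
  have P2: "card (alphabet s m :: ((nat \<Rightarrow> nat) \<Rightarrow> 'a) set) = CARD('a) ^ (s + m - 1 choose s)"
  proof -
    have "card (alphabet s m :: ((nat \<Rightarrow> nat) \<Rightarrow> 'a) set) = CARD('a) ^ card (mons s m)"
      unfolding alphabet_def by (simp add: card_PiE finite_mons)
    moreover have "card (mons s m) = (s + m - 1 choose s)"
      using card_mons[of s "m - 1"] assms(1) by simp
    ultimately show ?thesis by simp
  qed
  have P3: "mult_code m d s \<subseteq> PiE (pts s) (\<lambda>_. alphabet s m :: ((nat \<Rightarrow> nat) \<Rightarrow> 'a) set)"
    unfolding mult_code_def mult_codeword_def alphabet_def by auto
  have inj: "inj_on (mult_codeword m d s :: _ \<Rightarrow> (nat \<Rightarrow> 'a) \<Rightarrow> _) (polys s d)"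
  proof (rule inj_onI)
    fix c1 c2 :: "(nat \<Rightarrow> nat) \<Rightarrow> 'a"
    assume c1: "c1 \<in> polys s d" and c2: "c2 \<in> polys s d"
      and eq: "mult_codeword m d s c1 = mult_codeword m d s c2"
    have "(\<lambda>e. c1 e - c2 e) = (\<lambda>_. 0)"
    proof (rule grid_zero[where S="\<lambda>_. UNIV" and n=q and M=m])
      show "\<forall>j<s. q \<le> card (UNIV :: 'a set)" by (simp add: q_def)
      show "d < m * q" by (rule dmq)
      show "\<forall>e. e \<notin> mons s (Suc d) \<longrightarrow> c1 e - c2 e = 0" using c1 c2 by (simp add: polys_def)
      show "\<forall>w\<in>grid (\<lambda>_. UNIV) s. \<forall>i\<in>mons s m. hasse s d (\<lambda>e. c1 e - c2 e) i w = 0"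
      proof (intro ballI)
        fix w :: "nat \<Rightarrow> 'a" and i assume w: "w \<in> grid (\<lambda>_. UNIV) s" and i: "i \<in> mons s m"
        have "w \<in> pts s" using w by (simp add: grid_def pts_def)
        then have "mult_codeword m d s c1 w i = mult_codeword m d s c2 w i" using eq by simp
        then have "hasse s d c1 i w = hasse s d c2 i w"
          using \<open>w \<in> pts s\<close> i by (simp add: mult_codeword_def)
        then show "hasse s d (\<lambda>e. c1 e - c2 e) i w = 0" by (simp add: hasse_diff)
      qed
    qed
    then show "c1 = c2" by (auto simp: fun_eq_iff dest: fun_cong)
  qed
  have P4: "card (mult_code m d s :: ((nat \<Rightarrow> 'a) \<Rightarrow> ((nat \<Rightarrow> nat) \<Rightarrow> 'a)) set) = CARD('a) ^ (d + s choose s)"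
  proof -
    have "card (mult_code m d s :: ((nat \<Rightarrow> 'a) \<Rightarrow> ((nat \<Rightarrow> nat) \<Rightarrow> 'a)) set) = card (polys s d :: ((nat \<Rightarrow> nat) \<Rightarrow> 'a) set)"
      unfolding mult_code_def by (rule card_image[OF inj])
    also have "\<dots> = CARD('a) ^ card (mons s (Suc d))"
      unfolding polys_def by (rule card_supp[OF finite_mons])
    also have "card (mons s (Suc d)) = (d + s choose s)" by (simp add: card_mons add.commute)
    finally show ?thesis .
  qed
  have P5: "\<forall>w \<in> pts s. pir_recoverable (pts s) (mult_code m d s :: ((nat \<Rightarrow> 'a) \<Rightarrow> ((nat \<Rightarrow> nat) \<Rightarrow> 'a)) set)
                       ((CARD('a) div m) ^ (s - 1)) w"
  proof
    fix w :: "nat \<Rightarrow> 'a" assume w: "w \<in> pts s"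
    obtain s1 where s1: "s = Suc s1" using assms(3) by (cases s) auto
    obtain f :: "nat \<Rightarrow> 'a" where f: "bij_betw f {0..<q} UNIV"
      using ex_bij_betw_nat_finite[of "UNIV :: 'a set"] unfolding q_def by auto
    define n where "n = q div m"
    have nm: "n * m \<le> q" unfolding n_def by (metis div_mult_mod_eq le_add1)
    define Bl where "Bl l = f ` {l*m..<l*m+m}" for l
    have Bl_card: "card (Bl l) = m" if "l < n" for l
      unfolding Bl_def using blocks(1)[OF f nm assms(1) that] .
    have Bl_disj: "Bl l \<inter> Bl l' = {}" if "l < n" "l' < n" "l \<noteq> l'" for l l'
      unfolding Bl_def using blocks(2)[OF f nm assms(1) that] .
    define L where "L = PiE {..<s1} (\<lambda>_. {..<n})"
    have cardL: "card L = n ^ s1" unfolding L_def by (simp add: card_PiE)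
    obtain g where g: "bij_betw g {0..<card L} L"
      using ex_bij_betw_nat_finite[of L] unfolding L_def by (auto simp: finite_PiE)
    define k where "k = n ^ s1"
    have kk: "(CARD('a) div m) ^ (s - 1) = k" unfolding k_def n_def q_def s1 by simp
    have gL: "g j \<in> L" if "j < k" for j using g that cardL k_def by (auto simp: bij_betw_def)
    define S where "S j = (\<lambda>i. Bl (g j i))" for j
    define R where "R j = {u. \<exists>v'\<in>grid (S j) s1. \<exists>t. t \<noteq> 0 \<and> u = (\<lambda>i. w i + t * (v'(s1:=1)) i)}" for j
    have Rpts: "R j \<subseteq> pts s" for j
      using w unfolding R_def pts_def grid_def s1 by auto
    have Rdisj: "R j \<inter> R j' = {}" if j: "j < k" "j' < k" "j \<noteq> j'" for j j'
    proof (rule ccontr)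
      assume "R j \<inter> R j' \<noteq> {}"
      then obtain v1 v2 :: "nat \<Rightarrow> 'a" and t1 t2 where
        v1: "v1 \<in> grid (S j) s1" and v2: "v2 \<in> grid (S j') s1" and t: "t1 \<noteq> 0" "t2 \<noteq> 0"
        and eq: "(\<lambda>i. w i + t1 * (v1(s1:=1)) i) = (\<lambda>i. w i + t2 * (v2(s1:=1)) i)"
        unfolding R_def by blast
      have "t1 = t2" using fun_cong[OF eq, of s1] by simp
      then have vv: "v1 i = v2 i" if "i < s1" for i
        using fun_cong[OF eq, of i] that t by simp
      have "g j \<noteq> g j'" using g j cardL k_def by (auto simp: bij_betw_def inj_on_def)
      then obtain i where i: "i < s1" "g j i \<noteq> g j' i"
        using gL[OF j(1)] gL[OF j(2)] unfolding L_def by (metis PiE_ext lessThan_iff)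
      have "g j i < n" "g j' i < n" using gL[OF j(1)] gL[OF j(2)] i unfolding L_def by auto
      moreover have "v1 i \<in> Bl (g j i)" "v2 i \<in> Bl (g j' i)"
        using v1 v2 i by (auto simp: grid_def S_def)
      ultimately show False using Bl_disj i vv by (metis disjoint_iff)
    qed
    have Rrec: "c1 w = c2 w" if j: "j < k" and c1: "c1 \<in> mult_code m d s" and c2: "c2 \<in> mult_code m d s"
      and agree: "\<forall>y\<in>R j. c1 y = c2 y" for j and c1 c2 :: "(nat \<Rightarrow> 'a) \<Rightarrow> ((nat \<Rightarrow> nat) \<Rightarrow> 'a)"
    proof -
      obtain P1 where P1: "P1 \<in> polys s d" "c1 = mult_codeword m d s P1" using c1 by (auto simp: mult_code_def)
      obtain P2 where P2: "P2 \<in> polys s d" "c2 = mult_codeword m d s P2" using c2 by (auto simp: mult_code_def)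
      define P where "P e = P1 e - P2 e" for e
      have hz: "\<forall>i\<in>mons s m. hasse s d P i u = 0" if u: "u \<in> R j" for u
      proof
        fix i assume i: "i \<in> mons s m"
        have "u \<in> pts s" using Rpts u by blast
        then have "c1 u i = c2 u i" using agree u by simp
        then have "hasse s d P1 i u = hasse s d P2 i u"
          using \<open>u \<in> pts s\<close> i P1 P2 by (simp add: mult_codeword_def)
        then show "hasse s d P i u = 0" unfolding P_def by (simp add: hasse_diff)
      qed
      have "\<forall>i\<in>mons (Suc s1) m. hasse (Suc s1) d P i w = 0"
      proof (rule recover[OF dm[unfolded q_def]])
        show "\<forall>i<s1. m \<le> card (S j i)"
        proof (intro allI impI)
          fix i assume "i < s1"
          then have "g j i < n" using gL[OF j] unfolding L_def by auto
          then show "m \<le> card (S j i)" unfolding S_def using Bl_card by simp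
        qed
        show "\<forall>v'\<in>grid (S j) s1. \<forall>t. t \<noteq> 0 \<longrightarrow>
               (\<forall>i\<in>mons (Suc s1) m. hasse (Suc s1) d P i (\<lambda>i. w i + t * (v'(s1:=1)) i) = 0)"
        proof (intro ballI allI impI)
          fix v' t i assume "v' \<in> grid (S j) s1" "t \<noteq> (0::'a)" "i \<in> mons (Suc s1) m"
          then show "hasse (Suc s1) d P i (\<lambda>i. w i + t * (v'(s1:=1)) i) = 0"
            using hz[of "\<lambda>i. w i + t * (v'(s1:=1)) i"] unfolding R_def s1 by blast
        qed
      qed
      then have "\<forall>i\<in>mons s m. hasse s d P1 i w = hasse s d P2 i w"
        unfolding s1 P_def by (simp add: hasse_diff)
      then show "c1 w = c2 w" using w P1 P2 by (simp add: mult_codeword_def cong: restrict_cong)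
    qed
    show "pir_recoverable (pts s) (mult_code m d s :: ((nat \<Rightarrow> 'a) \<Rightarrow> ((nat \<Rightarrow> nat) \<Rightarrow> 'a)) set)
                       ((CARD('a) div m) ^ (s - 1)) w"
      unfolding pir_recoverable_def kk
      by (rule exI[of _ R]) (use Rpts Rdisj Rrec in blast)
  qed
  show ?thesis using P1 P2 P3 P4 P5 by blast
qed

end
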